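(* Let $n$ be a positive integer and $G$ a finite subgroup of $\mathrm{GL}_n(A)$, where $A=\mathbb{F}_q[t]$ and $q$ is a power of the prime $p$. Then the largest divisor of $\#G$ prime to $p$ divides $\prod_{s=1}^n(q^s-1)$. *)

theory Defs
  imports "HOL-Analysis.Analysis" "HOL-Computational_Algebra.Polynomial"
begin

definition prime_to_part :: "nat \<Rightarrow> nat \<Rightarrow> nat" where
  "prime_to_part m p = Max {d. d dvd m \<and> coprime d p}"

definition GL_subgroup :: "('a::comm_ring_1 ^ 'n ^ 'n) set \<Rightarrow> bool" where
  "GL_subgroup G \<longleftrightarrow> G \<subseteq> {M. invertible M} \<and> mat 1 \<in> G
     \<and> (\<forall>A\<in>G. \<forall>B\<in>G. A ** B \<in> G)
     \<and> (\<forall>A\<in>G. \<exists>B\<in>G. A ** B = mat 1 \<and> B ** A = mat 1)"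

end

theory Submission
  imports Defs "HOL-Algebra.Sylow" "HOL-Algebra.Coset" "HOL-Number_Theory.Residues"
begin

definition lcomb :: "('a::field^'n) list \<Rightarrow> (nat \<Rightarrow> 'a) \<Rightarrow> 'a^'n" where
  "lcomb xs c = (\<Sum>i<length xs. c i *s xs ! i)"

definition Wsp :: "('a::field^'n) list \<Rightarrow> ('a^'n) set" where
  "Wsp xs = range (lcomb xs)"

definition findep :: "('a::field^'n) list \<Rightarrow> bool" where
  "findep xs \<longleftrightarrow> (\<forall>c. lcomb xs c = 0 \<longrightarrow> (\<forall>i<length xs. c i = 0))"

lemma lcomb_Cons: "lcomb (v # xs) c = c 0 *s v + lcomb xs (\<lambda>i. c (Suc i))"
  unfolding lcomb_def by (simp add: sum.lessThan_Suc_shift del: sum.lessThan_Suc)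

lemma findep_Cons: "findep (v # xs) \<longleftrightarrow> findep xs \<and> v \<notin> Wsp xs"
proof
  assume h: "findep (v # xs)"
  have "findep xs"
    unfolding findep_def
  proof (intro allI impI)
    fix c i assume c: "lcomb xs c = 0" and i: "i < length xs"
    define c' where "c' = (\<lambda>j. if j = 0 then 0 else c (j - 1))"
    have "lcomb (v # xs) c' = 0" using c by (simp add: lcomb_Cons c'_def)
    with h i have "c' (Suc i) = 0" unfolding findep_def by auto
    thus "c i = 0" by (simp add: c'_def)
  qed
  moreover have "v \<notin> Wsp xs"
  proof
    assume "v \<in> Wsp xs"
    then obtain c where c: "v = lcomb xs c" unfolding Wsp_def by auto
    define c' where "c' = (\<lambda>j. if j = 0 then -1 else c (j - 1))"
    have "lcomb (v # xs) c' = 0" using c by (simp add: lcomb_Cons c'_def)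
    with h have "c' 0 = 0" unfolding findep_def by auto
    thus False by (simp add: c'_def)
  qed
  ultimately show "findep xs \<and> v \<notin> Wsp xs" by blast
next
  assume h: "findep xs \<and> v \<notin> Wsp xs"
  show "findep (v # xs)"
    unfolding findep_def
  proof (intro allI impI)
    fix c i assume c: "lcomb (v # xs) c = 0" and i: "i < length (v # xs)"
    have c0: "c 0 = 0"
    proof (rule ccontr)
      assume nz: "c 0 \<noteq> 0"
      have "v = lcomb xs (\<lambda>j. - c (Suc j) / c 0)"
      proof -
        have e: "c 0 *s v = - lcomb xs (\<lambda>i. c (Suc i))"
          using c by (simp add: lcomb_Cons eq_neg_iff_add_eq_0)
        have "v = inverse (c 0) *s (c 0 *s v)" using nz by simp
        also have "\<dots> = lcomb xs (\<lambda>j. - c (Suc j) / c 0)"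
          unfolding e lcomb_def
          by (simp add: vec.scale_sum_right vector_smult_assoc divide_inverse_commute sum_negf)
        finally show ?thesis .
      qed
      hence "v \<in> Wsp xs" unfolding Wsp_def by auto
      with h show False by blast
    qed
    have "lcomb xs (\<lambda>i. c (Suc i)) = 0" using c c0 by (simp add: lcomb_Cons)
    with h have "\<forall>j<length xs. c (Suc j) = 0" unfolding findep_def by blast
    with c0 i show "c i = 0" by (cases i) auto
  qed
qed

lemma card_Wsp:
  fixes xs :: "('a::{field,finite}^'n) list"
  assumes "findep xs"
  shows "card (Wsp xs) = CARD('a) ^ length xs"
proof -
  let ?k = "length xs"
  have W: "Wsp xs = lcomb xs ` ({..<?k} \<rightarrow>\<^sub>E UNIV)"
  proof
    show "Wsp xs \<subseteq> lcomb xs ` ({..<?k} \<rightarrow>\<^sub>E UNIV)"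
    proof
      fix w assume "w \<in> Wsp xs"
      then obtain c where w: "w = lcomb xs c" unfolding Wsp_def by auto
      have "lcomb xs c = lcomb xs (restrict c {..<?k})"
        unfolding lcomb_def by (rule sum.cong) auto
      moreover have "restrict c {..<?k} \<in> {..<?k} \<rightarrow>\<^sub>E UNIV" by auto
      ultimately show "w \<in> lcomb xs ` ({..<?k} \<rightarrow>\<^sub>E UNIV)" using w by blast
    qed
  qed (auto simp: Wsp_def)
  have inj: "inj_on (lcomb xs) ({..<?k} \<rightarrow>\<^sub>E UNIV)"
  proof (rule inj_onI)
    fix c d assume c: "c \<in> {..<?k} \<rightarrow>\<^sub>E UNIV" and d: "d \<in> {..<?k} \<rightarrow>\<^sub>E UNIV"
      and e: "lcomb xs c = lcomb xs d"
    have "lcomb xs (\<lambda>i. c i - d i) = lcomb xs c - lcomb xs d"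
      unfolding lcomb_def by (simp add: vector_sub_rdistrib sum_subtractf)
    with e have "lcomb xs (\<lambda>i. c i - d i) = 0" by simp
    with assms have "\<forall>i<?k. c i - d i = 0" unfolding findep_def by blast
    hence "\<forall>i<?k. c i = d i" by simp
    with c d show "c = d" by (intro PiE_ext) auto
  qed
  have "card (Wsp xs) = card ({..<?k} \<rightarrow>\<^sub>E (UNIV::'a set))"
    unfolding W by (rule card_image[OF inj])
  also have "\<dots> = CARD('a) ^ ?k" by (simp add: card_PiE)
  finally show ?thesis .
qed

definition LI :: "nat \<Rightarrow> ('a::field^'n) list set" where
  "LI k = {xs. length xs = k \<and> findep xs}"

lemma finite_LI: "finite (LI k :: ('a::{field,finite}^'n) list set)"
proof -
  have "LI k \<subseteq> {xs. set xs \<subseteq> (UNIV :: ('a^'n) set) \<and> length xs = k}"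
    unfolding LI_def by auto
  thus ?thesis by (rule finite_subset) (rule finite_lists_length_eq, simp)
qed

lemma card_LI:
  "card (LI k :: ('a::{field,finite}^'n) list set) = (\<Prod>i<k. CARD('a) ^ CARD('n) - CARD('a) ^ i)"
proof (induction k)
  case 0
  have "LI 0 = {[] :: ('a^'n) list}" unfolding LI_def findep_def by auto
  thus ?case by simp
next
  case (Suc k)
  let ?f = "\<lambda>(xs, v). (v # xs :: ('a^'n) list)"
  have eq: "LI (Suc k) = ?f ` (SIGMA xs:(LI k :: ('a^'n) list set). - Wsp xs)"
  proof
    show "LI (Suc k) \<subseteq> ?f ` (SIGMA xs:LI k. - Wsp xs)"
    proof
      fix ys :: "('a^'n) list" assume "ys \<in> LI (Suc k)"
      then obtain v xs where ys: "ys = v # xs" "length xs = k" "findep (v # xs)"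
        unfolding LI_def by (cases ys) auto
      hence "xs \<in> LI k" "v \<in> - Wsp xs" unfolding LI_def by (auto simp: findep_Cons)
      thus "ys \<in> ?f ` (SIGMA xs:LI k. - Wsp xs)" using ys by (auto intro: image_eqI[of _ _ "(xs, v)"])
    qed
    show "?f ` (SIGMA xs:LI k. - Wsp xs) \<subseteq> LI (Suc k)"
      by (auto simp: LI_def findep_Cons)
  qed
  have inj: "inj_on ?f (SIGMA xs:LI k. - Wsp xs)" by (auto simp: inj_on_def)
  have "card (LI (Suc k) :: ('a^'n) list set) = card (SIGMA xs:(LI k :: ('a^'n) list set). - Wsp xs)"
    unfolding eq by (rule card_image[OF inj])
  also have "\<dots> = (\<Sum>xs\<in>(LI k :: ('a^'n) list set). card (- Wsp xs))"
    by (rule card_SigmaI) (auto simp: finite_LI)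
  also have "\<dots> = (\<Sum>xs\<in>(LI k :: ('a^'n) list set). CARD('a) ^ CARD('n) - CARD('a) ^ k)"
  proof (rule sum.cong)
    fix xs :: "('a^'n) list" assume "xs \<in> LI k"
    hence "card (Wsp xs) = CARD('a) ^ k" unfolding LI_def using card_Wsp by blast
    thus "card (- Wsp xs) = CARD('a) ^ CARD('n) - CARD('a) ^ k"
      by (simp add: Compl_eq_Diff_UNIV card_Diff_subset)
  qed simp
  also have "\<dots> = card (LI k :: ('a^'n) list set) * (CARD('a) ^ CARD('n) - CARD('a) ^ k)"
    by simp
  finally show ?case using Suc by simp
qed

definition idx :: "'n list \<Rightarrow> 'n \<Rightarrow> nat" where
  "idx ns x = the_inv_into {..<length ns} ((!) ns) x"

lemma idx_facts:
  assumes "distinct ns" "set ns = UNIV"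
  shows "\<And>j. j < length ns \<Longrightarrow> idx ns (ns ! j) = j"
    and "\<And>x. ns ! (idx ns x) = x" and "\<And>x. idx ns x < length ns"
proof -
  have bij: "bij_betw ((!) ns) {..<length ns} UNIV"
    by (rule bij_betw_nth) (use assms in auto)
  hence inj: "inj_on ((!) ns) {..<length ns}" and im: "(!) ns ` {..<length ns} = UNIV"
    by (auto simp: bij_betw_def)
  show "\<And>j. j < length ns \<Longrightarrow> idx ns (ns ! j) = j"
    unfolding idx_def using inj by (simp add: the_inv_into_f_f)
  show "\<And>x. ns ! (idx ns x) = x"
    unfolding idx_def using inj im by (simp add: f_the_inv_into_f)
  show "\<And>x. idx ns x < length ns"
    unfolding idx_def using inj im the_inv_into_into[OF inj, of _ "{..<length ns}"] by auto
qed

lemma invertible_iff_findep: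
  fixes M :: "'a::field^'n^'n" and ns :: "'n list"
  assumes ns: "distinct ns" "set ns = UNIV"
  shows "invertible M \<longleftrightarrow> findep (map (\<lambda>i. M $ i) ns)"
proof -
  have bij: "bij_betw ((!) ns) {..<length ns} UNIV"
    by (rule bij_betw_nth) (use ns in auto)
  have rw: "(\<Sum>i\<in>UNIV. d i *s row i M) = (\<Sum>j<length ns. d (ns ! j) *s M $ (ns ! j))" for d
    by (subst sum.reindex_bij_betw[OF bij, symmetric]) (simp add: row_def vec_lambda_eta)
  have inv: "invertible M \<longleftrightarrow> (\<forall>d. (\<Sum>i\<in>UNIV. d i *s row i M) = 0 \<longrightarrow> (\<forall>i. d i = 0))"
    unfolding invertible_right_inverse matrix_right_invertible_independent_rows ..
  have lc: "lcomb (map (\<lambda>i. M $ i) ns) c = (\<Sum>j<length ns. c j *s M $ (ns ! j))" for c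
    unfolding lcomb_def by simp
  show ?thesis
  proof
    assume h: "invertible M"
    show "findep (map (\<lambda>i. M $ i) ns)"
      unfolding findep_def
    proof (intro allI impI)
      fix c i assume c: "lcomb (map (($) M) ns) c = 0" and i: "i < length (map (($) M) ns)"
      define d where "d = (\<lambda>x. c (idx ns x))"
      have "(\<Sum>x\<in>UNIV. d x *s row x M) = lcomb (map (\<lambda>i. M $ i) ns) c"
        unfolding rw lc d_def using ns by (intro sum.cong) (auto simp: idx_facts)
      with c h inv have "d (ns ! i) = 0" by auto
      thus "c i = 0" using i ns by (simp add: d_def idx_facts)
    qed
  next
    assume h: "findep (map (\<lambda>i. M $ i) ns)"
    have "\<forall>d. (\<Sum>i\<in>UNIV. d i *s row i M) = 0 \<longrightarrow> (\<forall>i. d i = 0)"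
    proof (intro allI impI)
      fix d i assume d: "(\<Sum>i\<in>UNIV. d i *s row i M) = 0"
      have "lcomb (map (\<lambda>i. M $ i) ns) (\<lambda>j. d (ns ! j)) = 0" using d unfolding rw lc .
      with h have "\<forall>j<length (map (\<lambda>i. M $ i) ns). d (ns ! j) = 0" unfolding findep_def by blast
      hence "\<forall>j<length ns. d (ns ! j) = 0" by simp
      moreover have "i \<in> set ns" using ns by auto
      ultimately show "d i = 0" by (metis in_set_conv_nth)
    qed
    thus "invertible M" using inv by blast
  qed
qed

lemma card_GL:
  "card {M :: ('a::{field,finite})^'n^'n. invertible M} = (\<Prod>i<CARD('n). CARD('a) ^ CARD('n) - CARD('a) ^ i)"
proof -
  obtain ns :: "'n list" where ns: "set ns = UNIV" "distinct ns"
    using finite_distinct_list[of "UNIV :: 'n set"] by auto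
  have len: "length ns = CARD('n)" using ns distinct_card by fastforce
  let ?f = "\<lambda>M :: 'a^'n^'n. map (\<lambda>i. M $ i) ns"
  have "bij_betw ?f {M. invertible M} (LI CARD('n))"
    unfolding bij_betw_def
  proof
    show "inj_on ?f {M. invertible M}"
      by (rule inj_onI) (simp add: vec_eq_iff ns(1) flip: set_eq_iff; metis ns(1) UNIV_I map_eq_conv)
    show "?f ` {M. invertible M} = LI CARD('n)"
    proof
      show "?f ` {M. invertible M} \<subseteq> LI CARD('n)"
        using invertible_iff_findep[OF ns(2,1)] len by (auto simp: LI_def)
      show "LI CARD('n) \<subseteq> ?f ` {M. invertible M}"
      proof
        fix xs :: "('a^'n) list" assume xs: "xs \<in> LI CARD('n)"
        define M :: "'a^'n^'n" where "M = (\<chi> i. xs ! idx ns i)"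
        have fM: "?f M = xs"
          using xs len ns by (intro nth_equalityI) (auto simp: LI_def M_def idx_facts)
        hence "invertible M" using invertible_iff_findep[OF ns(2,1), of M] xs by (simp add: LI_def)
        with fM show "xs \<in> ?f ` {M. invertible M}" by blast
      qed
    qed
  qed
  hence "card {M :: 'a^'n^'n. invertible M} = card (LI CARD('n) :: ('a^'n) list set)"
    by (rule bij_betw_same_card)
  thus ?thesis by (simp add: card_LI)
qed

definition red :: "('a::comm_ring_1) poly^'n^'n \<Rightarrow> 'a^'n^'n" where
  "red M = (\<chi> i j. poly (M $ i $ j) 0)"

lemma red_mult: "red (A ** B) = red A ** red B"
  by (simp add: red_def matrix_matrix_mult_def vec_eq_iff poly_sum)

lemma red_one: "red (mat 1) = mat 1"
  by (simp add: red_def mat_def vec_eq_iff)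

primrec mpow :: "'a::semiring_1^'n^'n \<Rightarrow> nat \<Rightarrow> 'a^'n^'n" where
  "mpow M 0 = mat 1"
| "mpow M (Suc n) = mpow M n ** M"

lemma matrix_add_rdistrib': "((B + C) ** A) = (B ** A) + (C ** A)"
  by (simp add: matrix_matrix_mult_def vec_eq_iff sum.distrib distrib_right)

lemma key:
  fixes g :: "('a::field) poly^'n^'n"
  assumes r: "red g = mat 1" and m: "mpow g m = mat 1" and c: "\<not> CHAR('a) dvd m"
  shows "g = mat 1"
proof (rule ccontr)
  assume ne: "g \<noteq> mat 1"
  define X where "X = g - mat 1"
  have gX: "g = mat 1 + X" by (simp add: X_def)
  have X0: "Polynomial.coeff (X $ i $ j) 0 = 0" for i j
  proof -
    have "red g $ i $ j = mat 1 $ i $ j" using r by simp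
    hence "poly (g $ i $ j) 0 = (if i = j then 1 else 0)" by (simp add: red_def mat_def)
    thus ?thesis by (simp add: X_def poly_0_coeff_0 mat_def)
  qed
  have "X \<noteq> 0" using ne by (simp add: X_def)
  then obtain i0 j0 where "X $ i0 $ j0 \<noteq> 0" by (metis vec_eq_iff zero_index)
  hence "Polynomial.coeff (X $ i0 $ j0) (Polynomial.degree (X $ i0 $ j0)) \<noteq> 0" by simp
  hence ex: "\<exists>k. \<exists>i j. Polynomial.coeff (X $ i $ j) k \<noteq> 0" by blast
  define k where "k = (LEAST k. \<exists>i j. Polynomial.coeff (X $ i $ j) k \<noteq> 0)"
  obtain i1 j1 where c1: "Polynomial.coeff (X $ i1 $ j1) k \<noteq> 0"
    using LeastI_ex[OF ex] unfolding k_def by blast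
  have below: "Polynomial.coeff (X $ i $ j) l = 0" if "l < k" for i j l
    using not_less_Least[OF that[unfolded k_def]] by blast
  have k0: "k \<noteq> 0" using c1 X0 by (cases k) auto
  define d :: "'a poly" where "d = Polynomial.monom 1 k"
  have dX: "d dvd X $ i $ j" for i j
    unfolding d_def monom_1_dvd_iff' using below by blast
  have claim: "\<exists>R. (\<forall>i j. d * d dvd R $ i $ j) \<and>
      mpow g n = mat 1 + (\<chi> i j. Polynomial.smult (of_nat n) (X $ i $ j)) + R" for n
  proof (induction n)
    case 0
    show ?case by (rule exI[of _ 0]) (simp add: vec_eq_iff mat_def)
  next
    case (Suc n)
    then obtain R where R: "\<forall>i j. d * d dvd R $ i $ j"
      and e: "mpow g n = mat 1 + (\<chi> i j. Polynomial.smult (of_nat n) (X $ i $ j)) + R" by blast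
    define S where "S = (\<chi> i j. Polynomial.smult (of_nat n) (X $ i $ j)) + R"
    have dS: "d dvd S $ i $ j" for i j
    proof -
      have "d dvd Polynomial.smult (of_nat n) (X $ i $ j)" using dX[of i j] by (rule dvd_smult)
      moreover have "d dvd R $ i $ j" using R dvd_mult_left by blast
      ultimately show ?thesis unfolding S_def by simp
    qed
    have dSX: "d * d dvd (S ** X) $ i $ j" for i j
      unfolding matrix_matrix_mult_def using dS dX
      by (auto intro!: dvd_sum mult_dvd_mono)
    have "mpow g (Suc n) = (mat 1 + S) ** (mat 1 + X)"
      using e gX by (simp add: S_def add.assoc)
    also have "\<dots> = (mat 1 + S) + ((mat 1 + S) ** X)"
      by (simp only: matrix_add_ldistrib matrix_mul_rid)
    also have "\<dots> = (mat 1 + S) + (X + S ** X)"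
      by (simp only: matrix_add_rdistrib' matrix_mul_lid)
    also have "\<dots> = mat 1 + X + S + S ** X"
      by (simp only: add.assoc add.commute add.left_commute)
    also have "\<dots> = mat 1 + (\<chi> i j. Polynomial.smult (of_nat (Suc n)) (X $ i $ j)) + (R + S ** X)"
      by (simp add: S_def vec_eq_iff smult_add_left algebra_simps)
    finally show ?case using R dSX by (intro exI[of _ "R + S ** X"]) auto
  qed
  then obtain R where R: "\<forall>i j. d * d dvd R $ i $ j"
      and e: "mpow g m = mat 1 + (\<chi> i j. Polynomial.smult (of_nat m) (X $ i $ j)) + R" by blast
  have AR: "(\<chi> i j. Polynomial.smult (of_nat m) (X $ i $ j)) + R = 0"
    using e m by (simp add: add.assoc)
  hence "Polynomial.smult (of_nat m) (X $ i1 $ j1) + R $ i1 $ j1 = 0"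
  proof -
    have "((\<chi> i j. Polynomial.smult (of_nat m) (X $ i $ j)) + R) $ i1 $ j1 = 0" using AR by simp
    thus ?thesis by simp
  qed
  hence "Polynomial.coeff (Polynomial.smult (of_nat m) (X $ i1 $ j1) + R $ i1 $ j1) k = 0" by simp
  moreover have "Polynomial.coeff (R $ i1 $ j1) k = 0"
  proof -
    have "d * d = Polynomial.monom 1 (k + k)" by (simp add: d_def mult_monom)
    hence "Polynomial.monom 1 (k + k) dvd R $ i1 $ j1" using R by metis
    thus ?thesis using k0 unfolding monom_1_dvd_iff' by simp
  qed
  ultimately have "of_nat m * Polynomial.coeff (X $ i1 $ j1) k = (0::'a)" by simp
  with c1 have "of_nat m = (0::'a)" by simp
  with c show False by (simp add: of_nat_eq_0_iff_char_dvd)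
qed

definition mgrp :: "('a::comm_ring_1^'n^'n) set \<Rightarrow> ('a^'n^'n) monoid" where
  "mgrp S = \<lparr>carrier = S, mult = (\<lambda>A B. A ** B), one = mat 1\<rparr>"

lemma group_mgrp: "GL_subgroup S \<Longrightarrow> group (mgrp S)"
  unfolding GL_subgroup_def
  by (rule groupI) (auto simp: mgrp_def matrix_mul_assoc)

lemma pow_mgrp: "mult R = (\<lambda>A B. A ** B) \<Longrightarrow> one R = mat 1 \<Longrightarrow> pow R x n = mpow x n"
  by (induct n) (simp_all add: nat_pow_def)

lemma GL_subgroup_GL: "GL_subgroup {M :: 'a::comm_ring_1^'n^'n. invertible M}"
  unfolding GL_subgroup_def
proof (intro conjI ballI)
  show "mat 1 \<in> {M :: 'a^'n^'n. invertible M}" by (auto simp: invertible_def)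
  fix A B :: "'a^'n^'n" assume A: "A \<in> {M. invertible M}"
  then obtain A' where A': "A ** A' = mat 1" "A' ** A = mat 1" by (auto simp: invertible_def)
  thus "\<exists>B\<in>{M. invertible M}. A ** B = mat 1 \<and> B ** A = mat 1"
    by (auto simp: invertible_def)
  assume B: "B \<in> {M. invertible M}"
  then obtain B' where B': "B ** B' = mat 1" "B' ** B = mat 1" by (auto simp: invertible_def)
  have "(A ** B) ** (B' ** A') = mat 1"
    by (metis A'(1) B'(1) matrix_mul_assoc matrix_mul_rid)
  moreover have "(B' ** A') ** (A ** B) = mat 1"
    by (metis A'(2) B'(2) matrix_mul_assoc matrix_mul_rid)
  ultimately show "A ** B \<in> {M. invertible M}" by (auto simp: invertible_def)
qed simp

lemma GL_subgroup_red:
  fixes G :: "('a::comm_ring_1 poly ^ 'n ^ 'n) set"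
  assumes "GL_subgroup G"
  shows "GL_subgroup (red ` G)"
proof -
  have h1: "mat 1 \<in> G" and h2: "\<And>A B. A \<in> G \<Longrightarrow> B \<in> G \<Longrightarrow> A ** B \<in> G"
    and h3: "\<And>A. A \<in> G \<Longrightarrow> \<exists>B\<in>G. A ** B = mat 1 \<and> B ** A = mat 1"
    using assms unfolding GL_subgroup_def by blast+
  have inv: "\<exists>B\<in>red ` G. A ** B = mat 1 \<and> B ** A = mat 1" if hA: "A \<in> red ` G" for A
  proof -
    obtain A0 where A0: "A0 \<in> G" "A = red A0" using hA by auto
    then obtain B0 where B0: "B0 \<in> G" "A0 ** B0 = mat 1" "B0 ** A0 = mat 1" using h3 by blast
    have "A ** red B0 = mat 1" "red B0 ** A = mat 1"
      using A0(2) B0(2,3) red_mult red_one by metis+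
    thus ?thesis using B0(1) by blast
  qed
  have cl: "A ** B \<in> red ` G" if hAB: "A \<in> red ` G" "B \<in> red ` G" for A B
  proof -
    obtain A0 where A0: "A0 \<in> G" "A = red A0" using hAB by auto
    obtain B1 where B1: "B1 \<in> G" "B = red B1" using hAB by auto
    have "A ** B = red (A0 ** B1)" using A0 B1 by (simp add: red_mult)
    moreover have "A0 ** B1 \<in> G" using h2 A0 B1 by blast
    ultimately show ?thesis by blast
  qed
  have sub: "red ` G \<subseteq> {M. invertible M}"
  proof
    fix M assume "M \<in> red ` G"
    thus "M \<in> {M. invertible M}" using inv[of M] by (auto simp: invertible_def)
  qed
  have "mat 1 \<in> red ` G" using h1 red_one by (metis image_eqI)
  thus ?thesis unfolding GL_subgroup_def using sub cl inv by blast
qed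

lemma prod_GL_eq:
  fixes q n :: nat
  shows "(\<Prod>i<n. q ^ n - q ^ i) = (\<Prod>i<n. q ^ i) * (\<Prod>s=1..n. q ^ s - 1)"
proof -
  have "(\<Prod>i<n. q ^ n - q ^ i) = (\<Prod>i<n. q ^ i * (q ^ (n - i) - 1))"
  proof (rule prod.cong)
    fix i assume "i \<in> {..<n}"
    hence "q ^ n = q ^ i * q ^ (n - i)" by (metis le_add_diff_inverse less_imp_le lessThan_iff power_add)
    thus "q ^ n - q ^ i = q ^ i * (q ^ (n - i) - 1)" by (metis diff_mult_distrib2 mult.right_neutral)
  qed simp
  also have "\<dots> = (\<Prod>i<n. q ^ i) * (\<Prod>i<n. q ^ (n - i) - 1)" by (rule prod.distrib)
  also have "(\<Prod>i<n. q ^ (n - i) - 1) = (\<Prod>s=1..n. q ^ s - 1)"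
    by (rule prod.reindex_bij_witness[where i="\<lambda>s. n - s" and j="\<lambda>i. n - i"]) (force simp: lessThan_iff atLeastAtMost_iff)+
  finally show ?thesis .
qed

theorem lemma2p12:
  fixes G :: "('a::{finite,field} poly ^ 'n::finite ^ 'n) set"
    and p e :: nat
  assumes "prime p" and "CARD('a) = p ^ e"
    and "GL_subgroup G" and "finite G"
  shows "prime_to_part (card G) p dvd (\<Prod>s=1..CARD('n). CARD('a) ^ s - 1)"
proof -
  note pp = assms(1) and cardA = assms(2) and GG = assms(3) and finG = assms(4)
  have charpos: "CHAR('a) > 0" by (rule finite_imp_CHAR_pos) simp
  have charprime: "prime CHAR('a)" by (rule prime_CHAR_semidom[OF charpos])
  have "CHAR('a) dvd p ^ e" using CHAR_dvd_CARD[where ?'a='a] cardA by simp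
  hence "CHAR('a) dvd p" using charprime prime_dvd_power by blast
  hence charp: "CHAR('a) = p" using charprime pp primes_dvd_imp_eq by blast
  define d where "d = prime_to_part (card G) p"
  have oneG: "mat 1 \<in> G" using GG unfolding GL_subgroup_def by blast
  have cG: "card G > 0" using finG oneG card_gt_0_iff by blast
  have dmem: "d \<in> {d. d dvd card G \<and> coprime d p}"
    unfolding d_def prime_to_part_def
  proof (rule Max_in)
    show "finite {d. d dvd card G \<and> coprime d p}"
      by (rule finite_subset[of _ "{..card G}"]) (use cG in \<open>auto dest: dvd_imp_le\<close>)
    show "{d. d dvd card G \<and> coprime d p} \<noteq> {}" by auto
  qed
  hence ddvd: "d dvd card G" and dcop: "coprime d p" by auto
  define Gr where "Gr = mgrp G"
  define Hr where "Hr = mgrp (red ` G)"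
  have grG: "group Gr" unfolding Gr_def by (rule group_mgrp[OF GG])
  have grH: "group Hr" unfolding Hr_def by (rule group_mgrp[OF GL_subgroup_red[OF GG]])
  have hom: "group_hom Gr Hr red"
    unfolding group_hom_def group_hom_axioms_def hom_def
    using grG grH by (auto simp: Gr_def Hr_def mgrp_def red_mult)
  define K where "K = kernel Gr Hr red"
  have subK: "subgroup K Gr" unfolding K_def by (rule group_hom.subgroup_kernel[OF hom])
  have Kdef: "K = {x \<in> G. red x = mat 1}" by (simp add: K_def kernel_def Gr_def Hr_def mgrp_def)
  have finK: "finite K" using finG Kdef by simp
  have lag: "card (rcosets\<^bsub>Gr\<^esub> K) * card K = card G"
    using group.lagrange[OF grG subK] by (simp add: Coset.order_def Gr_def mgrp_def)
  have "Gr Mod K \<cong> Hr"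
    unfolding K_def by (rule group_hom.FactGroup_iso[OF hom]) (simp add: Gr_def Hr_def mgrp_def)
  hence "card (carrier (Gr Mod K)) = card (carrier Hr)" by (rule iso_same_card)
  hence crH: "card (rcosets\<^bsub>Gr\<^esub> K) = card (red ` G)" by (simp add: FactGroup_def Hr_def mgrp_def)
  \<comment> \<open>the kernel has no elements of prime order other than p\<close>
  have copK: "coprime d (card K)"
  proof (rule ccontr)
    assume nc: "\<not> coprime d (card K)"
    have "gcd d (card K) \<noteq> 1" using nc by (simp add: coprime_iff_gcd_eq_1)
    then obtain l where l: "prime l" "l dvd gcd d (card K)" using prime_factor_nat by blast
    hence ld: "l dvd d" and lK: "l dvd card K" by auto
    have lp: "l \<noteq> p"
    proof
      assume "l = p"
      hence "p dvd gcd d p" using ld by simp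
      thus False using dcop pp by (simp add: coprime_iff_gcd_eq_1)
    qed
    define Kr where "Kr = Gr\<lparr>carrier := K\<rparr>"
    have grK: "group Kr" unfolding Kr_def by (rule group.subgroup_imp_group[OF grG subK])
    have "card (carrier Kr) = l ^ 1 * (card K div l)" using lK by (simp add: Kr_def)
    then obtain H where H: "subgroup H Kr" "card H = l ^ 1"
      using sylow_thm[OF l(1) grK, of 1 "card K div l"] finK by (auto simp: Coset.order_def Kr_def)
    have "card H \<ge> 2" using H(2) l(1) prime_ge_2_nat by simp
    hence "\<not> H \<subseteq> {mat 1}" by (metis card.empty card.insert card_mono finite.emptyI finite.insertI
          empty_iff not_less_eq_eq numeral_2_eq_2 subset_singletonD card_0_eq)
    then obtain x where xH: "x \<in> H" and x1: "x \<noteq> mat 1" by blast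
    define Hg where "Hg = Kr\<lparr>carrier := H\<rparr>"
    have grHg: "group Hg" unfolding Hg_def by (rule group.subgroup_imp_group[OF grK H(1)])
    have "pow Hg x (card (carrier Hg)) = one Hg"
      using group.pow_order_eq_1[OF grHg] xH by (simp add: Hg_def Coset.order_def)
    hence "mpow x l = mat 1"
      using H(2) by (simp add: Hg_def Kr_def Gr_def mgrp_def pow_mgrp)
    note mx = this
    have "x \<in> K" using subgroup.subset[OF H(1)] xH by (auto simp: Kr_def)
    hence rx: "red x = mat 1" using Kdef by simp
    have "\<not> CHAR('a) dvd l" using charp lp l(1) pp primes_dvd_imp_eq by blast
    hence "x = mat 1" by (rule key[OF rx mx])
    with x1 show False by simp
  qed
  have d1: "d dvd card (red ` G)"
  proof -
    have "d dvd card K * card (red ` G)" using ddvd lag crH by (simp add: mult.commute)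
    thus ?thesis using copK by (simp add: coprime_dvd_mult_right_iff)
  qed
  define GLr where "GLr = mgrp {M :: 'a^'n^'n. invertible M}"
  have grGL: "group GLr" unfolding GLr_def by (rule group_mgrp[OF GL_subgroup_GL])
  have redGL: "GL_subgroup (red ` G)" by (rule GL_subgroup_red[OF GG])
  have subH: "subgroup (red ` G) GLr"
  proof (rule group.subgroupI[OF grGL])
    show "red ` G \<subseteq> carrier GLr" using redGL by (simp add: GLr_def mgrp_def GL_subgroup_def)
    show "red ` G \<noteq> {}" using oneG by blast
    fix a b assume a: "a \<in> red ` G"
    then obtain a' where a': "a' \<in> red ` G" "a ** a' = mat 1" "a' ** a = mat 1"
      using redGL unfolding GL_subgroup_def by blast
    have "a \<in> carrier GLr" "a' \<in> carrier GLr"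
      using a a' redGL by (auto simp: GLr_def mgrp_def GL_subgroup_def)
    hence "inv\<^bsub>GLr\<^esub> a = a'"
      using group.inv_equality[OF grGL] a' by (simp add: GLr_def mgrp_def)
    thus "inv\<^bsub>GLr\<^esub> a \<in> red ` G" using a' by simp
    assume b: "b \<in> red ` G"
    have "a ** b \<in> red ` G" using a b redGL unfolding GL_subgroup_def by blast
    thus "a \<otimes>\<^bsub>GLr\<^esub> b \<in> red ` G" by (simp add: GLr_def mgrp_def)
  qed
  have "card (rcosets\<^bsub>GLr\<^esub> (red ` G)) * card (red ` G) = card {M :: 'a^'n^'n. invertible M}"
    using group.lagrange[OF grGL subH] by (simp add: Coset.order_def GLr_def mgrp_def)
  hence "card (red ` G) dvd card {M :: 'a^'n^'n. invertible M}" by (metis dvd_triv_right)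
  hence "d dvd (\<Prod>i<CARD('n). CARD('a) ^ CARD('n) - CARD('a) ^ i)"
    using d1 card_GL dvd_trans by metis
  hence dd: "d dvd (\<Prod>i<CARD('n). CARD('a) ^ i) * (\<Prod>s=1..CARD('n). CARD('a) ^ s - 1)"
    by (simp add: prod_GL_eq)
  have "coprime d (CARD('a))" using dcop cardA by simp
  hence "coprime d (\<Prod>i<CARD('n). CARD('a) ^ i)" by (intro prod_coprime_right) simp
  hence "d dvd (\<Prod>s=1..CARD('n). CARD('a) ^ s - 1)" using dd by (simp add: coprime_dvd_mult_right_iff)
  thus ?thesis by (simp add: d_def)
qed

end
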